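(* Let $c\in C^\infty(\mathbb{T}^1)$ (complex-valued), $q\in\mathbb{C}$, and $L=\partial_t+c(t)\partial_x+q$ on $\mathbb{T}^1\times\mathbb{R}$. Suppose $f\in(\ker L^t)^0$. Then for every $\xi\in\mathbb{R}$ the ordinary differential equation $$\partial_tw(t)+i(\xi c(t)-iq)w(t)=\widehat f(t,\xi),\qquad t\in\mathbb{T}^1,$$ admits a solution $w\in C^\infty(\mathbb{T}^1)$.
   Context: $\mathbb{T}^1=\mathbb{R}/2\pi\mathbb{Z}$. $\mathcal{S}(\mathbb{T}^1\times\mathbb{R})$ is the space of $f\in C^\infty(\mathbb{T}^1\times\mathbb{R})$ with $\sup_{t,x}|x^\gamma\partial_t^\alpha\partial_x^\beta f(t,x)|<\infty$ for all $\alpha,\beta,\gamma\in\mathbb{N}_0$, $\mathcal{S}'(\mathbb{T}^1\times\mathbb{R})$ its dual. $\widehat f(t,\xi)=\int_{\mathbb{R}}f(t,x)e^{-ix\xi}\,dx$ is the partial Fourier transform in $x$. $L^tv=-\partial_tv-c(t)\partial_xv+qv$ is the transpose of $L$, and $(\ker L^t)^0=\{f\in\mathcal{S}(\mathbb{T}^1\times\mathbb{R}):\langle v,f\rangle=0\text{ for all }v\in\mathcal{S}'(\mathbb{T}^1\times\mathbb{R})\text{ with }L^tv=0\}$. *)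

theory Defs
  imports "HOL-Analysis.Analysis"
begin

text \<open>Functions on T^1 = R/2piZ are represented as 2pi-periodic functions on R.\<close>

definition periodic2pi :: "(real \<Rightarrow> 'a) \<Rightarrow> bool" where
  "periodic2pi w \<longleftrightarrow> (\<forall>t. w (t + 2 * pi) = w t)"

definition smooth1 :: "(real \<Rightarrow> complex) \<Rightarrow> bool" where
  "smooth1 w \<longleftrightarrow> (\<exists>D :: nat \<Rightarrow> real \<Rightarrow> complex. D 0 = w \<and>
      (\<forall>k t. (D k has_vector_derivative D (Suc k) t) (at t)))"

text \<open>D a b is the partial derivative d_t^a d_x^b f; all of them exist and are
  jointly continuous, i.e. f is C^infinity on R^2.\<close>
definition smooth_derivs2 ::
  "(real \<Rightarrow> real \<Rightarrow> complex) \<Rightarrow> (nat \<Rightarrow> nat \<Rightarrow> real \<Rightarrow> real \<Rightarrow> complex) \<Rightarrow> bool" where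
  "smooth_derivs2 f D \<longleftrightarrow> D 0 0 = f \<and>
     (\<forall>a b t x. ((\<lambda>s. D a b s x) has_vector_derivative D (Suc a) b t x) (at t) \<and>
                ((\<lambda>y. D a b t y) has_vector_derivative D a (Suc b) t x) (at x)) \<and>
     (\<forall>a b. continuous_on UNIV (\<lambda>p. D a b (fst p) (snd p)))"

definition in_schwartz :: "(real \<Rightarrow> real \<Rightarrow> complex) \<Rightarrow> bool" where
  "in_schwartz f \<longleftrightarrow> (\<forall>t x. f (t + 2 * pi) x = f t x) \<and>
     (\<exists>D. smooth_derivs2 f D \<and>
        (\<forall>a b g. \<exists>C. \<forall>t x. \<bar>x\<bar> ^ g * norm (D a b t x) \<le> C))"

text \<open>Tempered distributions S'(T^1 x R): linear functionals on S, continuous for the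
  Schwartz topology (bounded by a constant times finitely many seminorms).\<close>
definition tempered :: "((real \<Rightarrow> real \<Rightarrow> complex) \<Rightarrow> complex) \<Rightarrow> bool" where
  "tempered v \<longleftrightarrow>
     (\<forall>f g (a::complex). in_schwartz f \<longrightarrow> in_schwartz g \<longrightarrow>
        v (\<lambda>t x. a * f t x + g t x) = a * v f + v g) \<and>
     (\<exists>C N. \<forall>f D M. in_schwartz f \<longrightarrow> smooth_derivs2 f D \<longrightarrow>
        (\<forall>a\<le>N. \<forall>b\<le>N. \<forall>g\<le>N. \<forall>t x. \<bar>x\<bar> ^ g * norm (D a b t x) \<le> M) \<longrightarrow>
        norm (v f) \<le> C * M)"

definition Lop :: "(real \<Rightarrow> complex) \<Rightarrow> complex \<Rightarrow> (real \<Rightarrow> real \<Rightarrow> complex) \<Rightarrow> real \<Rightarrow> real \<Rightarrow> complex" where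
  "Lop c q \<phi> = (\<lambda>t x. vector_derivative (\<lambda>s. \<phi> s x) (at t)
                    + c t * vector_derivative (\<lambda>y. \<phi> t y) (at x) + q * \<phi> t x)"

text \<open>(ker L^t)^0. For v in S', L^t v = 0 means <L^t v, phi> = <v, L phi> = 0 for all phi in S.\<close>
definition ann_ker_Lt :: "(real \<Rightarrow> complex) \<Rightarrow> complex \<Rightarrow> (real \<Rightarrow> real \<Rightarrow> complex) set" where
  "ann_ker_Lt c q = {f. in_schwartz f \<and>
     (\<forall>v. tempered v \<longrightarrow> (\<forall>\<phi>. in_schwartz \<phi> \<longrightarrow> v (Lop c q \<phi>) = 0) \<longrightarrow> v f = 0)}"

definition fhat :: "(real \<Rightarrow> real \<Rightarrow> complex) \<Rightarrow> real \<Rightarrow> real \<Rightarrow> complex" where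
  "fhat f t \<xi> = integral\<^sup>L lborel (\<lambda>x. f t x * cis (- (x * \<xi>)))"

end

theory Submission
  imports Defs "HOL-Probability.Sinc_Integral" "HOL-Real_Asymp.Real_Asymp"
begin

fun Ck :: "nat \<Rightarrow> (real \<Rightarrow> complex) \<Rightarrow> bool" where
  "Ck 0 g = True"
| "Ck (Suc k) g = (\<exists>g'. (\<forall>t. (g has_vector_derivative g' t) (at t)) \<and> Ck k g')"

lemma Ck_Suc_imp: "Ck (Suc k) g \<Longrightarrow> Ck k g"
  by (induction k arbitrary: g) auto

lemma Ck_add: "Ck k f \<Longrightarrow> Ck k g \<Longrightarrow> Ck k (\<lambda>t. f t + g t)"
proof (induction k arbitrary: f g)
  case (Suc k)
  then obtain f' g' where "\<forall>t. (f has_vector_derivative f' t) (at t)" "Ck k f'"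
    "\<forall>t. (g has_vector_derivative g' t) (at t)" "Ck k g'" by auto
  then show ?case using Suc.IH
    by (auto intro!: exI[of _ "\<lambda>t. f' t + g' t"] has_vector_derivative_add)
qed simp

lemma Ck_const: "Ck k (\<lambda>t. c)"
proof (induction k arbitrary: c)
  case (Suc k)
  then show ?case by (auto intro!: exI[of _ "\<lambda>t. 0"])
qed simp

lemma Ck_mult: "Ck k f \<Longrightarrow> Ck k g \<Longrightarrow> Ck k (\<lambda>t. f t * g t)"
proof (induction k arbitrary: f g)
  case (Suc k)
  then obtain f' g' where d: "\<forall>t. (f has_vector_derivative f' t) (at t)" "Ck k f'"
    "\<forall>t. (g has_vector_derivative g' t) (at t)" "Ck k g'" by auto
  have "Ck k f" "Ck k g" using Suc.prems Ck_Suc_imp by blast+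
  then have "Ck k (\<lambda>t. f t * g' t + f' t * g t)"
    using Suc.IH d Ck_add by blast
  then show ?case using d
    by (auto intro!: exI[of _ "\<lambda>t. f t * g' t + f' t * g t"] has_vector_derivative_mult)
qed simp

lemma Ck_exp: "Ck k g \<Longrightarrow> Ck k (\<lambda>t. exp (g t))"
proof (induction k arbitrary: g)
  case (Suc k)
  then obtain g' where d: "\<forall>t. (g has_vector_derivative g' t) (at t)" "Ck k g'" by auto
  have "Ck k g" using Suc.prems Ck_Suc_imp by blast
  then have "Ck k (\<lambda>t. g' t * exp (g t))"
    using Suc.IH d Ck_mult by blast
  moreover have "((\<lambda>t. exp (g t)) has_vector_derivative g' t * exp (g t)) (at t)" for t
    using field_vector_diff_chain_at[OF d(1)[rule_format, of t] DERIV_exp[of "g t"]]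
    by (simp add: o_def)
  ultimately show ?case by (auto intro!: exI[of _ "\<lambda>t. g' t * exp (g t)"])
qed simp

lemma Ck_anti: "(\<forall>t. (G has_vector_derivative g t) (at t)) \<Longrightarrow> Ck k g \<Longrightarrow> Ck (Suc k) G"
  by auto

lemma Ck_deriv: "Ck (Suc k) h \<Longrightarrow>
   (\<forall>t. (h has_vector_derivative vector_derivative h (at t)) (at t)) \<and> Ck k (\<lambda>t. vector_derivative h (at t))"
proof -
  assume "Ck (Suc k) h"
  then obtain g' where d: "\<forall>t. (h has_vector_derivative g' t) (at t)" "Ck k g'" by auto
  have "(\<lambda>t. vector_derivative h (at t)) = g'"
    using d(1) vector_derivative_at by blast
  then show ?thesis using d by metis
qed

lemma smooth1_iff: "smooth1 g \<longleftrightarrow> (\<forall>k. Ck k g)"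
proof
  assume "smooth1 g"
  then obtain D where D: "D 0 = g" "\<forall>k t. (D k has_vector_derivative D (Suc k) t) (at t)"
    unfolding smooth1_def by blast
  have "\<forall>j. Ck k (D j)" for k
    by (induction k) (use D in auto)
  then show "\<forall>k. Ck k g" using D by metis
next
  assume H: "\<forall>k. Ck k g"
  define V :: "(real \<Rightarrow> complex) \<Rightarrow> real \<Rightarrow> complex" where "V = (\<lambda>h t. vector_derivative h (at t))"
  define D where "D = (\<lambda>n. (V ^^ n) g)"
  have "\<forall>k. Ck k (D n)" for n
  proof (induction n)
    case 0 then show ?case using H by (simp add: D_def)
  next
    case (Suc n)
    show ?case
    proof
      fix k
      have "Ck (Suc k) (D n)" using Suc.IH by blast
      from Ck_deriv[OF this] have "Ck k (V (D n))" unfolding V_def by blast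
      then show "Ck k (D (Suc n))" by (simp add: D_def)
    qed
  qed
  have "(D k has_vector_derivative D (Suc k) t) (at t)" for k t
  proof -
    have "Ck (Suc 0) (D k)" using \<open>\<forall>k. Ck k (D _)\<close> by blast
    from Ck_deriv[OF this] have "(D k has_vector_derivative V (D k) t) (at t)" unfolding V_def by blast
    then show ?thesis by (simp add: D_def)
  qed
  then show "smooth1 g" unfolding smooth1_def by (auto intro!: exI[of _ D] simp: D_def)
qed

lemma Ck_all_cont: "\<forall>k. Ck k g \<Longrightarrow> (\<forall>t. (g has_vector_derivative vector_derivative g (at t)) (at t)) \<and> (\<forall>t. isCont g t)"
proof -
  assume "\<forall>k. Ck k g"
  then have "Ck (Suc 0) g" by blast
  from Ck_deriv[OF this] show ?thesis
    using has_vector_derivative_continuous by blast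
qed

lemma global_antideriv:
  fixes g :: "real \<Rightarrow> complex"
  assumes "\<And>t. isCont g t"
  shows "\<exists>G. G 0 = 0 \<and> (\<forall>t. (G has_vector_derivative g t) (at t))"
proof -
  obtain G0 where G0: "\<forall>x::real. -\<infinity> < x \<longrightarrow> x < \<infinity> \<longrightarrow> (G0 has_vector_derivative g x) (at x)"
    using einterval_antiderivative[of "-\<infinity>" "\<infinity>" g] assms by auto
  show ?thesis
    by (rule exI[of _ "\<lambda>t. G0 t - G0 0"]) (use G0 in \<open>auto intro!: derivative_eq_intros\<close>)
qed

lemma Ck_all_anti: "\<forall>t. (G has_vector_derivative g t) (at t) \<Longrightarrow> \<forall>k. Ck k g \<Longrightarrow> \<forall>k. Ck k G"
proof
  fix k assume "\<forall>t. (G has_vector_derivative g t) (at t)" "\<forall>k. Ck k g"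
  then show "Ck k G" by (cases k) auto
qed

lemma periodic_ode:
  fixes a F A :: "real \<Rightarrow> complex"
  assumes sa: "\<forall>k. Ck k a" and sF: "\<forall>k. Ck k F"
    and pa: "\<forall>t. a (t + 2*pi) = a t" and pF: "\<forall>t. F (t + 2*pi) = F t"
    and A: "\<forall>t. (A has_vector_derivative a t) (at t)" and A0: "A 0 = 0"
    and H: "exp (A (2*pi)) = 1 \<Longrightarrow> integral {0..2*pi} (\<lambda>t. exp (A t) * F t) = 0"
  shows "\<exists>w. periodic2pi w \<and> smooth1 w \<and> (\<forall>t. vector_derivative w (at t) + a t * w t = F t)"
proof -
  have sA: "\<forall>k. Ck k A" using Ck_all_anti[OF A sa] .
  have sEF: "\<forall>k. Ck k (\<lambda>t. exp (A t) * F t)"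
  proof
    fix k show "Ck k (\<lambda>t. exp (A t) * F t)" using Ck_mult[OF Ck_exp[OF sA[rule_format]] sF[rule_format]] .
  qed
  obtain J where J0: "J 0 = 0" and J: "\<forall>t. (J has_vector_derivative exp (A t) * F t) (at t)"
    using global_antideriv[of "\<lambda>t. exp (A t) * F t"] Ck_all_cont[OF sEF] by blast
  have sJ: "\<forall>k. Ck k J" using Ck_all_anti[OF J sEF] .
  have FTC: "((\<lambda>t. exp (A t) * F t) has_integral J (2*pi) - J 0) {0..2*pi}"
    by (rule fundamental_theorem_of_calculus) (use J in \<open>auto intro: has_vector_derivative_at_within\<close>)
  then have J2: "J (2*pi) = integral {0..2*pi} (\<lambda>t. exp (A t) * F t)"
    using integral_unique[OF FTC] J0 by simp
  define E where "E = exp (A (2*pi))"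
  define w0 where "w0 = (if E = 1 then 0 else J (2*pi) / (E - 1))"
  have w0: "w0 + J (2*pi) = E * w0"
  proof (cases "E = 1")
    case True
    then have "J (2*pi) = 0" using H J2 unfolding E_def by simp
    then show ?thesis using True by (simp add: w0_def)
  next
    case False then show ?thesis by (simp add: w0_def field_simps)
  qed
  define w where "w = (\<lambda>t. exp (- A t) * (w0 + J t))"
  have dexpm: "((\<lambda>t. exp (- A t)) has_vector_derivative - a t * exp (- A t)) (at t)" for t
  proof -
    have "((\<lambda>t. - A t) has_vector_derivative - a t) (at t)"
      using A by (auto intro!: derivative_eq_intros)
    from field_vector_diff_chain_at[OF this DERIV_exp[of "- A t"]] show ?thesis by (simp add: o_def)
  qed
  have dexp: "((\<lambda>t. exp (A t)) has_vector_derivative a t * exp (A t)) (at t)" for t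
    using field_vector_diff_chain_at[OF A[rule_format, of t] DERIV_exp[of "A t"]] by (simp add: o_def)
  have dw: "(w has_vector_derivative F t - a t * w t) (at t)" for t
  proof -
    have "(w has_vector_derivative exp (- A t) * (exp (A t) * F t) + (- a t * exp (- A t)) * (w0 + J t)) (at t)"
      unfolding w_def using dexpm J by (auto intro!: derivative_eq_intros)
    moreover have "exp (- A t) * (exp (A t) * F t) + (- a t * exp (- A t)) * (w0 + J t) = F t - a t * w t"
      by (simp add: w_def exp_minus field_simps)
    ultimately show ?thesis by simp
  qed
  have ode: "\<forall>t. vector_derivative w (at t) + a t * w t = F t"
    using vector_derivative_at[OF dw] by simp
  have w2: "w (2*pi) = w 0"
  proof -
    have "w (2*pi) = exp (- A (2*pi)) * (E * w0)" using w0 by (simp add: w_def)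
    also have "\<dots> = w0" by (simp add: E_def exp_minus)
    finally show ?thesis by (simp add: w_def J0 A0)
  qed
  define z where "z = (\<lambda>t. exp (A t) * (w (t + 2*pi) - w t))"
  have dz: "(z has_vector_derivative 0) (at t)" for t
  proof -
    have ds: "((\<lambda>t. w (t + 2*pi)) has_vector_derivative F t - a t * w (t + 2*pi)) (at t)"
    proof -
      have "((\<lambda>t. t + 2*pi) has_vector_derivative 1) (at t)"
        by (auto intro!: derivative_eq_intros)
      from vector_diff_chain_at[OF this dw[of "t + 2*pi"]] show ?thesis
        using pa pF by (simp add: o_def)
    qed
    have "(z has_vector_derivative exp (A t) * ((F t - a t * w (t + 2*pi)) - (F t - a t * w t))
            + a t * exp (A t) * (w (t + 2*pi) - w t)) (at t)"
      unfolding z_def using dexp ds dw by (auto intro!: derivative_eq_intros)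
    moreover have "exp (A t) * ((F t - a t * w (t + 2*pi)) - (F t - a t * w t))
            + a t * exp (A t) * (w (t + 2*pi) - w t) = 0"
      by (simp add: algebra_simps)
    ultimately show ?thesis by simp
  qed
  obtain cz where "\<forall>x\<in>UNIV. z x = cz"
    using has_derivative_zero_constant[of UNIV z] dz
    by (auto simp: has_vector_derivative_def)
  then have "z t = z 0" for t by simp
  then have "z t = 0" for t using w2 by (simp add: z_def A0)
  then have per: "periodic2pi w" unfolding periodic2pi_def z_def by simp
  have "Ck k w" for k
  proof -
    have "Ck k (\<lambda>t. (-1) * A t)" using Ck_mult[OF Ck_const sA[rule_format]] .
    then have "Ck k (\<lambda>t. - A t)" by simp
    then have 1: "Ck k (\<lambda>t. exp (- A t))" by (rule Ck_exp)
    have 2: "Ck k (\<lambda>t. w0 + J t)" using Ck_add[OF Ck_const sJ[rule_format]] .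
    show ?thesis unfolding w_def using Ck_mult[OF 1 2] .
  qed
  then show ?thesis using per ode smooth1_iff by blast
qed

lemma integrable_inv1: "integrable lborel (\<lambda>x::real. inverse (1 + x^2))"
  using integrable_inverse_1_plus_square unfolding set_integrable_def by simp

lemma B_nonneg: "\<forall>x. norm (h x) \<le> B / (1 + (x::real)^2) \<Longrightarrow> 0 \<le> B"
  using norm_ge_zero[of "h 0"] by (metis add.right_neutral div_by_1 order_trans power_zero_numeral zero_power2)

lemma integrable_by_bound:
  fixes h :: "real \<Rightarrow> complex"
  assumes c: "continuous_on UNIV h" and b: "\<forall>x. norm (h x) \<le> B / (1 + x^2)"
  shows "integrable lborel h"
proof (rule Bochner_Integration.integrable_bound)
  show "integrable lborel (\<lambda>x. B * inverse (1 + x^2))" using integrable_inv1 by simp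
  show "h \<in> borel_measurable lborel" using borel_measurable_continuous_onI[OF c] by simp
  have "0 \<le> B" using B_nonneg b by blast
  then show "AE x in lborel. norm (h x) \<le> norm (B * inverse (1 + x^2))"
    using b by (auto simp: divide_inverse abs_mult)
qed

lemma norm_integral_by_bound:
  fixes h :: "real \<Rightarrow> complex"
  assumes c: "continuous_on UNIV h" and b: "\<forall>x. norm (h x) \<le> B / (1 + x^2)"
  shows "norm (integral\<^sup>L lborel h) \<le> B * (LINT x|lborel. inverse (1 + x^2))"
proof -
  have "norm (integral\<^sup>L lborel h) \<le> (LINT x|lborel. B * inverse (1 + x^2))"
    by (rule Bochner_Integration.integral_norm_bound_integral)
      (use integrable_by_bound[OF c b] integrable_inv1 b in \<open>auto simp: divide_inverse\<close>)
  then show ?thesis by simp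
qed

lemma deriv_under_integral:
  fixes k kd kdd :: "real \<Rightarrow> real \<Rightarrow> complex"
  assumes d1: "\<And>s x. ((\<lambda>s. k s x) has_vector_derivative kd s x) (at s)"
      and d2: "\<And>s x. ((\<lambda>s. kd s x) has_vector_derivative kdd s x) (at s)"
      and i0: "\<And>s. integrable lborel (k s)" and i1: "\<And>s. integrable lborel (kd s)"
      and b2: "\<And>s x. norm (kdd s x) \<le> B / (1 + x^2)"
  shows "((\<lambda>s. integral\<^sup>L lborel (k s)) has_vector_derivative integral\<^sup>L lborel (kd t)) (at t)"
proof -
  define K where "K = (LINT x|lborel. inverse (1 + x^2::real))"
  have B0: "0 \<le> B" using B_nonneg[of "kdd 0" B] b2 by blast
  have pw: "norm (k y x - k t x - (y - t) *\<^sub>R kd t x) \<le> 3 * B * (y - t)^2 * inverse (1 + x^2)" for y x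
  proof -
    define Bx where "Bx = B / (1 + x^2)"
    have Bx0: "0 \<le> Bx" using B0 by (simp add: Bx_def)
    have s1: "norm (kd s x - kd t x) \<le> 3 * Bx * \<bar>s - t\<bar>" for s
    proof -
      have "norm (kd s x - kd t x - (s - t) *\<^sub>R kdd t x) \<le> norm (s - t) * (2 * Bx)"
      proof (rule vector_differentiable_bound_linearization[where S=UNIV and f="\<lambda>s. kd s x" and f'="\<lambda>s. kdd s x"])
        fix u assume "u \<in> (UNIV::real set)"
        have "norm (kdd u x - kdd t x) \<le> norm (kdd u x) + norm (kdd t x)" by (rule norm_triangle_ineq4)
        also have "\<dots> \<le> 2 * Bx" using b2[of u x] b2[of t x] by (simp add: Bx_def)
        finally show "norm (kdd u x - kdd t x) \<le> 2 * Bx" .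
      qed (use d2 in auto)
      moreover have "norm ((s - t) *\<^sub>R kdd t x) \<le> \<bar>s - t\<bar> * Bx"
        using mult_left_mono[OF b2[of t x] abs_ge_zero[of "s - t"]] by (simp add: Bx_def)
      ultimately have "norm (kd s x - kd t x) \<le> \<bar>s - t\<bar> * (2 * Bx) + \<bar>s - t\<bar> * Bx"
        using norm_triangle_ineq[of "kd s x - kd t x - (s - t) *\<^sub>R kdd t x" "(s - t) *\<^sub>R kdd t x"] norm_scaleR[of "s - t" "kdd t x"]
        by (simp only: diff_add_cancel real_norm_def)
      then show ?thesis by (simp add: algebra_simps)
    qed
    have "norm (k y x - k t x - (y - t) *\<^sub>R kd t x) \<le> norm (y - t) * (3 * Bx * \<bar>y - t\<bar>)"
    proof (rule vector_differentiable_bound_linearization[where S="closed_segment t y" and f="\<lambda>s. k s x" and f'="\<lambda>s. kd s x"])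
      show "\<And>u. u \<in> closed_segment t y \<Longrightarrow> ((\<lambda>s. k s x) has_vector_derivative kd u x) (at u within closed_segment t y)"
        using d1 has_vector_derivative_at_within by blast
      fix u assume "u \<in> closed_segment t y"
      then have "\<bar>u - t\<bar> \<le> \<bar>y - t\<bar>"
        by (auto simp: closed_segment_eq_real_ivl split: if_splits)
      then have "3 * Bx * \<bar>u - t\<bar> \<le> 3 * Bx * \<bar>y - t\<bar>"
        by (rule mult_left_mono) (use Bx0 in auto)
      then show "norm (kd u x - kd t x) \<le> 3 * Bx * \<bar>y - t\<bar>"
        using s1[of u] by linarith
    qed auto
    moreover have "norm (y - t) * (3 * Bx * \<bar>y - t\<bar>) = 3 * B * (y - t)^2 * inverse (1 + x^2)"
    proof -
      have "\<bar>y - t\<bar> * \<bar>y - t\<bar> = (y - t)^2" by (simp add: power2_eq_square abs_mult_self_eq)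
      then show ?thesis unfolding Bx_def real_norm_def divide_inverse by (metis mult.assoc mult.commute)
    qed
    ultimately show ?thesis by simp
  qed
  have ib: "norm (integral\<^sup>L lborel (k y) - integral\<^sup>L lborel (k t) - (y - t) *\<^sub>R integral\<^sup>L lborel (kd t))
            \<le> 3 * B * (y - t)^2 * K" for y
  proof -
    have "integral\<^sup>L lborel (k y) - integral\<^sup>L lborel (k t) - (y - t) *\<^sub>R integral\<^sup>L lborel (kd t)
       = (LINT x|lborel. k y x - k t x - (y - t) *\<^sub>R kd t x)"
      using i0 i1 by simp
    also have "norm \<dots> \<le> (LINT x|lborel. 3 * B * (y - t)^2 * inverse (1 + x^2))"
      by (rule Bochner_Integration.integral_norm_bound_integral) (use i0 i1 integrable_inv1 pw in auto)
    also have "\<dots> = 3 * B * (y - t)^2 * K" by (simp add: K_def)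
    finally show ?thesis .
  qed
  show ?thesis unfolding has_vector_derivative_def has_derivative_iff_norm
  proof (intro conjI)
    show "bounded_linear (\<lambda>h. h *\<^sub>R integral\<^sup>L lborel (kd t))" by (rule bounded_linear_scaleR_left)
    show "((\<lambda>y. norm (integral\<^sup>L lborel (k y) - integral\<^sup>L lborel (k t) - (y - t) *\<^sub>R integral\<^sup>L lborel (kd t)) / norm (y - t)) \<longlongrightarrow> 0) (at t)"
    proof (rule Lim_null_comparison)
      show "\<forall>\<^sub>F y in at t. norm (norm (integral\<^sup>L lborel (k y) - integral\<^sup>L lborel (k t) - (y - t) *\<^sub>R integral\<^sup>L lborel (kd t)) / norm (y - t)) \<le> 3 * B * K * \<bar>y - t\<bar>"
      proof (intro always_eventually allI)
        fix y
        show "norm (norm (integral\<^sup>L lborel (k y) - integral\<^sup>L lborel (k t) - (y - t) *\<^sub>R integral\<^sup>L lborel (kd t)) / norm (y - t)) \<le> 3 * B * K * \<bar>y - t\<bar>"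
        proof (cases "y = t")
          case False
          then have "norm (integral\<^sup>L lborel (k y) - integral\<^sup>L lborel (k t) - (y - t) *\<^sub>R integral\<^sup>L lborel (kd t)) / \<bar>y - t\<bar>
               \<le> 3 * B * (y - t)^2 * K / \<bar>y - t\<bar>"
            using ib[of y] by (simp add: divide_right_mono)
          also have "\<dots> = 3 * B * K * \<bar>y - t\<bar>" using False
            by (simp add: power2_eq_square field_simps abs_mult_self_eq)
          finally show ?thesis by simp
        qed simp
      qed
      have "((\<lambda>y. 3 * B * K * \<bar>y - t\<bar>) \<longlongrightarrow> 3 * B * K * \<bar>t - t\<bar>) (at t)"
        by (intro tendsto_intros)
      then show "((\<lambda>y. 3 * B * K * \<bar>y - t\<bar>) \<longlongrightarrow> 0) (at t)" by simp
    qed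
  qed
qed

lemma integral_deriv_zero:
  fixes h h' :: "real \<Rightarrow> complex"
  assumes d: "\<And>x. (h has_vector_derivative h' x) (at x)" and c: "\<And>x. isCont h' x"
    and i: "integrable lborel h'"
    and t1: "(h \<longlongrightarrow> 0) at_top" and t2: "(h \<longlongrightarrow> 0) at_bot"
  shows "integral\<^sup>L lborel h' = 0"
proof -
  have "(LBINT x=-\<infinity>..\<infinity>. h' x) = 0 - 0"
    by (rule interval_integral_FTC_integrable[where F=h])
      (use d c i t1 t2 in \<open>auto simp: ereal_tendsto_simps set_integrable_def\<close>)
  then show ?thesis by (simp add: interval_lebesgue_integral_def set_lebesgue_integral_def)
qed

lemma d_cis: "((\<lambda>x. cis (-(x*\<xi>))) has_vector_derivative (-\<xi>) *\<^sub>R (\<i> * cis (-(x*\<xi>)))) (at x)"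
proof -
  have 1: "((\<lambda>x. -(x*\<xi>)) has_derivative (\<lambda>h. -(h*\<xi>))) (at x)"
    by (auto intro!: derivative_eq_intros)
  show ?thesis unfolding has_vector_derivative_def
    by (rule has_derivative_eq_rhs[OF has_derivative_cis[OF 1]]) (auto simp: fun_eq_iff)
qed

definition sd :: "(nat \<Rightarrow> nat \<Rightarrow> real \<Rightarrow> real \<Rightarrow> complex) \<Rightarrow> bool" where
  "sd D \<longleftrightarrow> (\<forall>a b t x. ((\<lambda>s. D a b s x) has_vector_derivative D (Suc a) b t x) (at t) \<and>
                ((\<lambda>y. D a b t y) has_vector_derivative D a (Suc b) t x) (at x)) \<and>
     (\<forall>a b. \<exists>B. \<forall>t x. norm (D a b t x) \<le> B / (1 + x^2))"

lemma bound_from_moments: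
  fixes g :: "real \<Rightarrow> real \<Rightarrow> complex"
  assumes "\<forall>t x. \<bar>x\<bar> ^ 0 * norm (g t x) \<le> C0" "\<forall>t x. \<bar>x\<bar> ^ 2 * norm (g t x) \<le> C2"
  shows "\<forall>t x. norm (g t x) \<le> (C0 + C2) / (1 + (x::real)^2)"
proof (intro allI)
  fix t x
  have "norm (g t x) * (1 + x^2) \<le> C0 + C2"
  proof -
    have "\<bar>x\<bar> ^ 0 * norm (g t x) \<le> C0" "\<bar>x\<bar> ^ 2 * norm (g t x) \<le> C2" using assms by blast+
    then show ?thesis by (simp add: algebra_simps power2_abs)
  qed
  then show "norm (g t x) \<le> (C0 + C2) / (1 + x^2)"
    by (simp add: pos_le_divide_eq add_pos_nonneg)
qed

lemma schwartz_sd: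
  assumes "smooth_derivs2 f D" "\<forall>a b g. \<exists>C. \<forall>t x. \<bar>x\<bar> ^ g * norm (D a b t x) \<le> C"
  shows "sd D"
  unfolding sd_def
proof (intro conjI allI)
  fix a b
  obtain C0 where "\<forall>t x. \<bar>x\<bar> ^ 0 * norm (D a b t x) \<le> C0" using assms(2) by blast
  moreover obtain C2 where "\<forall>t x. \<bar>x\<bar> ^ 2 * norm (D a b t x) \<le> C2" using assms(2) by blast
  ultimately show "\<exists>B. \<forall>t x. norm (D a b t x) \<le> B / (1 + x^2)"
    using bound_from_moments[of "D a b"] by blast
qed (use assms(1) in \<open>auto simp: smooth_derivs2_def\<close>)

context
  fixes D :: "nat \<Rightarrow> nat \<Rightarrow> real \<Rightarrow> real \<Rightarrow> complex" and \<xi> :: real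
  assumes sdD: "sd D"
begin

lemma sd_dt: "((\<lambda>s. D a b s x) has_vector_derivative D (Suc a) b t x) (at t)"
  using sdD by (simp add: sd_def)

lemma sd_dx: "((\<lambda>y. D a b t y) has_vector_derivative D a (Suc b) t x) (at x)"
  using sdD by (simp add: sd_def)

lemma sd_bound: "\<exists>B. \<forall>t x. norm (D a b t x) \<le> B / (1 + x^2)"
  using sdD by (simp add: sd_def)

lemma sd_cont: "continuous_on UNIV (\<lambda>x. D a b t x * cis (-(x*\<xi>)))"
proof -
  have "continuous_on UNIV (\<lambda>x. D a b t x)"
    using sd_dx continuous_on_vector_derivative by blast
  then show ?thesis by (intro continuous_intros) auto
qed

lemma sd_isCont: "isCont (\<lambda>x. D a b t x * cis (-(x*\<xi>))) x"
  using sd_cont continuous_on_eq_continuous_at by blast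

lemma sd_bound2: "\<exists>B. \<forall>t x. norm (D a b t x * cis (-(x*\<xi>))) \<le> B / (1 + x^2)"
  using sd_bound[of a b] by (simp add: norm_mult)

lemma sd_integrable: "integrable lborel (\<lambda>x. D a b t x * cis (-(x*\<xi>)))"
  using sd_bound2[of a b] integrable_by_bound[OF sd_cont] by blast

lemma sd_fhat_dt: "((\<lambda>t. fhat (D a b) t \<xi>) has_vector_derivative fhat (D (Suc a) b) t \<xi>) (at t)"
proof -
  obtain B where B: "\<forall>t x. norm (D (Suc (Suc a)) b t x * cis (-(x*\<xi>))) \<le> B / (1 + x^2)"
    using sd_bound2 by blast
  show ?thesis unfolding fhat_def
    by (rule deriv_under_integral[where kdd="\<lambda>s x. D (Suc (Suc a)) b s x * cis (-(x*\<xi>))" and B=B]) (use B sd_integrable in \<open>auto intro!: derivative_eq_intros sd_dt\<close>)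
qed

lemma sd_fhat_cont: "continuous_on UNIV (\<lambda>t. fhat (D a b) t \<xi>)"
  by (rule continuous_on_vector_derivative, rule has_vector_derivative_at_within, rule sd_fhat_dt)

lemma sd_fhat_dx: "fhat (D a (Suc b)) t \<xi> = \<i> * \<xi> * fhat (D a b) t \<xi>"
proof -
  define h' where "h' = (\<lambda>x. D a (Suc b) t x * cis (-(x*\<xi>)) + (- \<i> * \<xi>) * (D a b t x * cis (-(x*\<xi>))))"
  have d: "((\<lambda>x. D a b t x * cis (-(x*\<xi>))) has_vector_derivative h' x) (at x)" for x
  proof -
    have "((\<lambda>x. D a b t x * cis (-(x*\<xi>))) has_vector_derivative
          D a b t x * ((-\<xi>) *\<^sub>R (\<i> * cis (-(x*\<xi>)))) + D a (Suc b) t x * cis (-(x*\<xi>))) (at x)"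
      by (rule has_vector_derivative_mult[OF sd_dx d_cis])
    then show ?thesis unfolding h'_def by (simp add: scaleR_conv_of_real algebra_simps)
  qed
  have ih: "integrable lborel h'" unfolding h'_def using sd_integrable by auto
  have ch: "isCont h' x" for x unfolding h'_def by (rule continuous_add[OF sd_isCont continuous_mult[OF continuous_const sd_isCont]])
  obtain B where B: "\<forall>t x. norm (D a b t x * cis (-(x*\<xi>))) \<le> B / (1 + x^2)"
    using sd_bound2 by blast
  have "((\<lambda>x. inverse (1 + x^2)) \<longlongrightarrow> (0::real)) at_top" by real_asymp
  from tendsto_mult_left_zero[OF this, of B]
  have lim1: "((\<lambda>x. B / (1 + x^2)) \<longlongrightarrow> 0) at_top" by (simp add: divide_inverse mult.commute)
  have "((\<lambda>x. inverse (1 + x^2)) \<longlongrightarrow> (0::real)) at_bot" by real_asymp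
  from tendsto_mult_left_zero[OF this, of B]
  have lim2: "((\<lambda>x. B / (1 + x^2)) \<longlongrightarrow> 0) at_bot" by (simp add: divide_inverse mult.commute)
  have t1: "((\<lambda>x. D a b t x * cis (-(x*\<xi>))) \<longlongrightarrow> 0) at_top"
    by (rule Lim_null_comparison[OF always_eventually lim1]) (use B in blast)
  have t2: "((\<lambda>x. D a b t x * cis (-(x*\<xi>))) \<longlongrightarrow> 0) at_bot"
    by (rule Lim_null_comparison[OF always_eventually lim2]) (use B in blast)
  have "integral\<^sup>L lborel h' = 0" by (rule integral_deriv_zero[OF d ch ih t1 t2])
  moreover have "integral\<^sup>L lborel h' = fhat (D a (Suc b)) t \<xi> + (- \<i> * \<xi>) * fhat (D a b) t \<xi>"
    unfolding h'_def fhat_def using sd_integrable by simp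
  ultimately show ?thesis by (simp add: algebra_simps)
qed

end

lemma fhat_D00: "smooth_derivs2 f D \<Longrightarrow> fhat f = fhat (D 0 0)"
  by (simp add: smooth_derivs2_def)

lemma in_schwartz_sd: "in_schwartz f \<Longrightarrow> \<exists>D. smooth_derivs2 f D \<and> sd D"
  unfolding in_schwartz_def using schwartz_sd by blast

lemma v_tempered:
  fixes A :: "real \<Rightarrow> complex"
  assumes cA: "continuous_on UNIV A"
  shows "tempered (\<lambda>\<phi>. integral {0..2*pi} (\<lambda>t. exp (A t) * fhat \<phi> t \<xi>))"
  unfolding tempered_def
proof (intro conjI allI impI)
  have ce: "continuous_on UNIV (\<lambda>t. exp (A t))" using cA by (intro continuous_intros)
  have cfh: "continuous_on {0..2*pi} (\<lambda>t. exp (A t) * fhat f t \<xi>)" if fs: "in_schwartz f" for f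
  proof -
    obtain D where D: "smooth_derivs2 f D" "sd D" using in_schwartz_sd[OF fs] by blast
    have "continuous_on UNIV (\<lambda>t. fhat (D 0 0) t \<xi>)" using sd_fhat_cont[OF D(2)] .
    then have "continuous_on UNIV (\<lambda>t. exp (A t) * fhat f t \<xi>)"
      using ce fhat_D00[OF D(1)] by (auto intro: continuous_on_mult)
    then show ?thesis by (rule continuous_on_subset) auto
  qed
  fix f g and a :: complex
  assume f: "in_schwartz f" and g: "in_schwartz g"
  obtain Df where Df: "smooth_derivs2 f Df" "sd Df" using in_schwartz_sd[OF f] by blast
  obtain Dg where Dg: "smooth_derivs2 g Dg" "sd Dg" using in_schwartz_sd[OF g] by blast
  have lin: "fhat (\<lambda>t x. a * f t x + g t x) t \<xi> = a * fhat f t \<xi> + fhat g t \<xi>" for t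
  proof -
    have ef: "f = Df 0 0" and eg: "g = Dg 0 0" using Df(1) Dg(1) by (simp_all add: smooth_derivs2_def)
    have i1: "integrable lborel (\<lambda>x. f t x * cis (-(x*\<xi>)))"
      unfolding ef by (rule sd_integrable[OF Df(2)])
    have i2: "integrable lborel (\<lambda>x. g t x * cis (-(x*\<xi>)))"
      unfolding eg by (rule sd_integrable[OF Dg(2)])
    have "(\<lambda>x. (a * f t x + g t x) * cis (-(x*\<xi>))) = (\<lambda>x. a * (f t x * cis (-(x*\<xi>))) + g t x * cis (-(x*\<xi>)))"
      by (simp add: fun_eq_iff algebra_simps)
    then show ?thesis unfolding fhat_def using i1 i2 by simp
  qed
  have "integral {0..2*pi} (\<lambda>t. exp (A t) * fhat (\<lambda>t x. a * f t x + g t x) t \<xi>)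
      = integral {0..2*pi} (\<lambda>t. a * (exp (A t) * fhat f t \<xi>) + exp (A t) * fhat g t \<xi>)"
    unfolding lin by (simp add: algebra_simps)
  also have "\<dots> = integral {0..2*pi} (\<lambda>t. a * (exp (A t) * fhat f t \<xi>)) + integral {0..2*pi} (\<lambda>t. exp (A t) * fhat g t \<xi>)"
    by (rule Henstock_Kurzweil_Integration.integral_add)
      (use integrable_continuous_interval[OF cfh[OF f]] integrable_continuous_interval[OF cfh[OF g]] in \<open>auto intro: integrable_on_mult_right\<close>)
  also have "\<dots> = a * integral {0..2*pi} (\<lambda>t. exp (A t) * fhat f t \<xi>) + integral {0..2*pi} (\<lambda>t. exp (A t) * fhat g t \<xi>)"
    by simp
  finally show "integral {0..2*pi} (\<lambda>t. exp (A t) * fhat (\<lambda>t x. a * f t x + g t x) t \<xi>)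
      = a * integral {0..2*pi} (\<lambda>t. exp (A t) * fhat f t \<xi>) + integral {0..2*pi} (\<lambda>t. exp (A t) * fhat g t \<xi>)" .
next
  have "compact ((\<lambda>t. exp (A t)) ` {0..2*pi})"
    by (rule compact_continuous_image) (use cA in \<open>auto intro!: continuous_intros intro: continuous_on_subset\<close>)
  then obtain Em where Em: "Em > 0" "\<forall>y\<in>(\<lambda>t. exp (A t)) ` {0..2*pi}. norm y \<le> Em"
    using compact_imp_bounded bounded_pos by metis
  define K where "K = (LINT x|lborel. inverse (1 + x^2::real))"
  have K0: "0 \<le> K" unfolding K_def by (rule integral_nonneg_AE) (auto simp: add_pos_nonneg)
  show "\<exists>C N. \<forall>f D M. in_schwartz f \<longrightarrow> smooth_derivs2 f D \<longrightarrow>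
        (\<forall>a\<le>N. \<forall>b\<le>N. \<forall>g\<le>N. \<forall>t x. \<bar>x\<bar> ^ g * norm (D a b t x) \<le> M) \<longrightarrow>
        norm (integral {0..2*pi} (\<lambda>t. exp (A t) * fhat f t \<xi>)) \<le> C * M"
  proof (intro exI[of _ "Em * (2 * K) * (2 * pi)"] exI[of _ "2::nat"] allI impI)
    fix f D M
    assume f: "in_schwartz f" and D: "smooth_derivs2 f D"
      and bd: "\<forall>a\<le>2::nat. \<forall>b\<le>2::nat. \<forall>g\<le>2::nat. \<forall>t x. \<bar>x\<bar> ^ g * norm (D a b t x) \<le> M"
    have m0: "\<forall>t x. \<bar>x\<bar> ^ 0 * norm (D 0 0 t x) \<le> M" using bd le0 by blast
    have m2: "\<forall>t x. \<bar>x\<bar> ^ 2 * norm (D 0 0 t x) \<le> M" using bd le0 order_refl by blast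
    have M0: "0 \<le> M" using m0 norm_ge_zero[of "D 0 0 0 0"] by (metis mult_1 order_trans power_0)
    have bD: "\<forall>t x. norm (D 0 0 t x) \<le> (M + M) / (1 + x^2)"
      by (rule bound_from_moments[OF m0 m2])
    have fh: "norm (fhat f t \<xi>) \<le> (M + M) * K" for t
    proof -
      have cD: "continuous_on UNIV (\<lambda>x. D 0 0 t x)"
        using D unfolding smooth_derivs2_def
        by (intro continuous_on_vector_derivative) (auto intro: has_vector_derivative_at_within)
      have "norm (integral\<^sup>L lborel (\<lambda>x. D 0 0 t x * cis (-(x*\<xi>)))) \<le> (M + M) * K"
        unfolding K_def
        by (rule norm_integral_by_bound) (use cD bD in \<open>auto intro!: continuous_intros simp: norm_mult\<close>)
      then show ?thesis using fhat_D00[OF D] by (simp add: fhat_def)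
    qed
    have pt: "norm (exp (A t) * fhat f t \<xi>) \<le> Em * ((M + M) * K)" if "t \<in> {0..2*pi}" for t
    proof -
      have "norm (exp (A t)) \<le> Em" using Em(2) that by blast
      then show ?thesis unfolding norm_mult
        by (rule mult_mono) (use fh Em K0 M0 in auto)
    qed
    have B0: "0 \<le> Em * ((M + M) * K)" using Em K0 M0 by simp
    have "norm (integral {0..2*pi} (\<lambda>t. exp (A t) * fhat f t \<xi>)) \<le> Em * ((M + M) * K) * measure lborel (cbox 0 (2*pi))"
    proof (cases "(\<lambda>t. exp (A t) * fhat f t \<xi>) integrable_on cbox 0 (2*pi)")
      case True
      show ?thesis
        by (rule has_integral_bound[OF B0]) (use True pt in \<open>auto simp: box_real\<close>)
    next
      case False
      then show ?thesis using mult_nonneg_nonneg[OF B0 pi_ge_zero] by (simp add: not_integrable_integral box_real content_real mult.assoc)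
    qed
    also have "\<dots> = Em * (2 * K) * (2 * pi) * M" by (simp add: box_real content_real)
    finally show "norm (integral {0..2*pi} (\<lambda>t. exp (A t) * fhat f t \<xi>)) \<le> Em * (2 * K) * (2 * pi) * M" .
  qed
qed

lemma v_Lop:
  fixes A c :: "real \<Rightarrow> complex" and q :: complex and \<xi> :: real
  assumes dA: "\<forall>t. (A has_vector_derivative (\<i> * of_real \<xi> * c t + q)) (at t)"
    and E: "exp (A (2*pi)) = exp (A 0)"
    and phi: "in_schwartz \<phi>"
  shows "integral {0..2*pi} (\<lambda>t. exp (A t) * fhat (Lop c q \<phi>) t \<xi>) = 0"
proof -
  obtain D where D: "smooth_derivs2 \<phi> D" "sd D" using in_schwartz_sd[OF phi] by blast
  have e: "\<phi> = D 0 0" using D(1) by (simp add: smooth_derivs2_def)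
  have L: "Lop c q \<phi> = (\<lambda>t x. D (Suc 0) 0 t x + c t * D 0 (Suc 0) t x + q * D 0 0 t x)"
    unfolding Lop_def e
    using vector_derivative_at[OF sd_dt[OF D(2)]] vector_derivative_at[OF sd_dx[OF D(2)]]
    by (simp add: fun_eq_iff)
  define G where "G a b t = fhat (D a b) t \<xi>" for a b t
  have fL: "fhat (Lop c q \<phi>) t \<xi> = G (Suc 0) 0 t + c t * G 0 (Suc 0) t + q * G 0 0 t" for t
  proof -
    have i1: "integrable lborel (\<lambda>x. D (Suc 0) 0 t x * cis (-(x*\<xi>)))"
      and i2: "integrable lborel (\<lambda>x. D 0 (Suc 0) t x * cis (-(x*\<xi>)))"
      and i3: "integrable lborel (\<lambda>x. D 0 0 t x * cis (-(x*\<xi>)))"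
      by (rule sd_integrable[OF D(2)])+
    have "(\<lambda>x. (D (Suc 0) 0 t x + c t * D 0 (Suc 0) t x + q * D 0 0 t x) * cis (-(x*\<xi>)))
        = (\<lambda>x. (D (Suc 0) 0 t x * cis (-(x*\<xi>)) + c t * (D 0 (Suc 0) t x * cis (-(x*\<xi>))))
               + q * (D 0 0 t x * cis (-(x*\<xi>))))"
      by (simp add: fun_eq_iff algebra_simps)
    then show ?thesis unfolding L fhat_def G_def
      using i1 i2 i3 by (simp add: integrable_add)
  qed
  have G01: "G 0 (Suc 0) t = \<i> * \<xi> * G 0 0 t" for t
    unfolding G_def by (rule sd_fhat_dx[OF D(2)])
  have dG: "((\<lambda>t. G 0 0 t) has_vector_derivative G (Suc 0) 0 t) (at t)" for t
    unfolding G_def by (rule sd_fhat_dt[OF D(2)])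
  have dexp: "((\<lambda>t. exp (A t)) has_vector_derivative (\<i> * of_real \<xi> * c t + q) * exp (A t)) (at t)" for t
    using field_vector_diff_chain_at[OF dA[rule_format, of t] DERIV_exp[of "A t"]] by (simp add: o_def)
  have dP: "((\<lambda>t. exp (A t) * G 0 0 t) has_vector_derivative exp (A t) * fhat (Lop c q \<phi>) t \<xi>) (at t)" for t
  proof -
    have "((\<lambda>t. exp (A t) * G 0 0 t) has_vector_derivative
        exp (A t) * G (Suc 0) 0 t + (\<i> * of_real \<xi> * c t + q) * exp (A t) * G 0 0 t) (at t)"
      by (rule has_vector_derivative_mult[OF dexp dG])
    moreover have "exp (A t) * G (Suc 0) 0 t + (\<i> * of_real \<xi> * c t + q) * exp (A t) * G 0 0 t
        = exp (A t) * fhat (Lop c q \<phi>) t \<xi>"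
      unfolding fL G01 by (simp add: algebra_simps)
    ultimately show ?thesis by simp
  qed
  have "((\<lambda>t. exp (A t) * fhat (Lop c q \<phi>) t \<xi>) has_integral
        (exp (A (2*pi)) * G 0 0 (2*pi) - exp (A 0) * G 0 0 0)) {0..2*pi}"
    by (rule fundamental_theorem_of_calculus) (use dP in \<open>auto intro: has_vector_derivative_at_within\<close>)
  moreover have "G 0 0 (2*pi) = G 0 0 0"
  proof -
    have "\<forall>t x. \<phi> (t + 2 * pi) x = \<phi> t x" using phi by (simp add: in_schwartz_def)
    then have "\<phi> (0 + 2 * pi) = \<phi> 0" by blast
    then show ?thesis unfolding G_def fhat_def e[symmetric] by simp
  qed
  ultimately show ?thesis using E by (simp add: integral_unique)
qed

theorem lemma5p2:
  fixes c :: "real \<Rightarrow> complex" and q :: complex and f :: "real \<Rightarrow> real \<Rightarrow> complex"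
  assumes "smooth1 c" and "periodic2pi c"
    and "f \<in> ann_ker_Lt c q"
  shows "\<forall>\<xi>::real. \<exists>w :: real \<Rightarrow> complex. periodic2pi w \<and> smooth1 w \<and>
           (\<forall>t. vector_derivative w (at t)
                 + \<i> * (of_real \<xi> * c t - \<i> * q) * w t = fhat f t \<xi>)"
proof (intro allI)
  fix \<xi> :: real
  define a where "a = (\<lambda>t. \<i> * (of_real \<xi> * c t - \<i> * q))"
  have a_eq: "a = (\<lambda>t. \<i> * of_real \<xi> * c t + q)"
    by (simp add: a_def fun_eq_iff algebra_simps)
  have sc: "\<forall>k. Ck k c" using assms(1) smooth1_iff by blast
  have sa: "\<forall>k. Ck k a"
  proof
    fix k
    show "Ck k a" unfolding a_eq
      by (rule Ck_add[OF Ck_mult[OF Ck_const sc[rule_format]] Ck_const])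
  qed
  have pa: "\<forall>t. a (t + 2*pi) = a t" using assms(2) by (simp add: a_def periodic2pi_def)
  have fs: "in_schwartz f"
    and ann: "\<And>v. tempered v \<Longrightarrow> (\<forall>\<phi>. in_schwartz \<phi> \<longrightarrow> v (Lop c q \<phi>) = 0) \<Longrightarrow> v f = 0"
    using assms(3) by (auto simp: ann_ker_Lt_def)
  obtain D where D: "smooth_derivs2 f D" "sd D" using in_schwartz_sd[OF fs] by blast
  have e: "f = D 0 0" using D(1) by (simp add: smooth_derivs2_def)
  have sFj: "\<forall>j. Ck k (\<lambda>t. fhat (D j 0) t \<xi>)" for k
  proof (induction k)
    case (Suc k)
    show ?case
    proof
      fix j
      have "\<forall>t. ((\<lambda>t. fhat (D j 0) t \<xi>) has_vector_derivative fhat (D (Suc j) 0) t \<xi>) (at t)"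
        using sd_fhat_dt[OF D(2)] by blast
      moreover have "Ck k (\<lambda>t. fhat (D (Suc j) 0) t \<xi>)" using Suc.IH by blast
      ultimately show "Ck (Suc k) (\<lambda>t. fhat (D j 0) t \<xi>)" by (rule Ck_anti)
    qed
  qed simp
  have sF: "\<forall>k. Ck k (\<lambda>t. fhat f t \<xi>)" using sFj e by simp
  have pF: "\<forall>t. fhat f (t + 2*pi) \<xi> = fhat f t \<xi>"
    using fs by (simp add: in_schwartz_def fhat_def)
  obtain A where A0: "A 0 = 0" and dA: "\<forall>t. (A has_vector_derivative a t) (at t)"
    using global_antideriv[of a] Ck_all_cont[OF sa] by blast
  have H: "integral {0..2*pi} (\<lambda>t. exp (A t) * fhat f t \<xi>) = 0" if E: "exp (A (2*pi)) = 1"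
  proof -
    have cA: "continuous_on UNIV A"
      by (rule continuous_on_vector_derivative) (use dA in \<open>auto intro: has_vector_derivative_at_within\<close>)
    have dA': "\<forall>t. (A has_vector_derivative (\<i> * of_real \<xi> * c t + q)) (at t)"
      using dA unfolding a_eq by simp
    have E': "exp (A (2*pi)) = exp (A 0)" using E A0 by simp
    show ?thesis
      by (rule ann[OF v_tempered[OF cA]]) (use v_Lop[OF dA' E'] in blast)
  qed
  obtain w where "periodic2pi w" "smooth1 w" "\<forall>t. vector_derivative w (at t) + a t * w t = fhat f t \<xi>"
    using periodic_ode[OF sa sF pa pF dA A0 H] by blast
  then show "\<exists>w. periodic2pi w \<and> smooth1 w \<and>
           (\<forall>t. vector_derivative w (at t) + \<i> * (of_real \<xi> * c t - \<i> * q) * w t = fhat f t \<xi>)"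
    unfolding a_def by blast
qed

end
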